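(* Let $G$ be a graph with vertex set $V$ partitioned into $V_1,\dots,V_k$ with no edge inside any $V_i$, let $G'$, $X,Y,U$ be as constructed in the context, and let $S=V\cup X\cup U$, $T=V\cup Y\cup U$ and $\ell=8\binom{k}{2}+2k$. If $G$ contains a clique $\{v_1,\dots,v_k\}$ with $v_i\in V_i$ for all $i$, then there is a token sliding reconfiguration sequence of length at most $\ell$ from $S$ to $T$ in $G'$.
   Context: Construction of $G'$: start with $V$. For each edge $e=\{u,v\}$ of $G$ add a vertex $x_e$ adjacent to $u$ and $v$; let $E$ be the set of all $x_e$, and for each unordered pair $\{i,j\}$, $i\ne j$, let $\mathcal{E}_{ij}$ be the set of $x_e$ with $e$ joining $V_i$ and $V_j$; label these $\binom k2$ sets by $1,\dots,\binom k2$. Add independent sets $X=\{a_1,\dots,a_{\binom k2}\}$, $Y=\{b_1,\dots,b_{\binom k2}\}$. For each label $t$ and each $x_e$ in the set labeled $t$, add a path $a_t-p-q-r-x_e$ with three new internal vertices, putting the middle vertex $q$ into $U_1$, and a path $b_t-p'-q'-r'-x_e$ with three new internal vertices, putting $q'$ into $U_2$; $U=U_1\cup U_2$. For each $v\in V$ add a new vertex $z_v$ adjacent only to $v$. A token sliding reconfiguration sequence of length $m$ from $S$ to $T$ is a sequence $S=I_0,\dots,I_m=T$ of independent sets of size $|S|$ with each $I_{j+1}=(I_j\setminus\{u\})\cup\{w\}$ for some $u\in I_j$, $w\notin I_j$, $\{u,w\}\in E(G')$. *)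

theory Defs
  imports Main
begin

text \<open>Edge-subdivision vertex x_e is
  Ex e; the internal vertices of the path a_t - p - q - r - x_e are P1 e, Q1 e, R1 e;
  those of b_t - p' - q' - r' - x_e are P2 e, Q2 e, R2 e; a_t = A t, b_t = B t,
  z_v = Z v, and the original vertex v is Vx v.\<close>
datatype 'v gvert = Vx 'v | Ex "'v set" | A nat | B nat
  | P1 "'v set" | Q1 "'v set" | R1 "'v set"
  | P2 "'v set" | Q2 "'v set" | R2 "'v set" | Z 'v

definition part_pairs :: "nat \<Rightarrow> nat set set" where
  "part_pairs k = {{i, j} | i j. i \<in> {1..k} \<and> j \<in> {1..k} \<and> i \<noteq> j}"

text \<open>The graph G = (V, Ed) with partition given by part : V \<rightarrow> {1..k}
  (V_i = {v \<in> V. part v = i}).  An edge e joins V_i and V_j iff part ` e = {i,j}.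
  lab labels the pair sets by 1..(k choose 2).\<close>

definition G'_verts :: "'v set \<Rightarrow> 'v set set \<Rightarrow> nat \<Rightarrow> 'v gvert set" where
  "G'_verts V Ed k = Vx ` V \<union> Ex ` Ed \<union> A ` {1..k choose 2} \<union> B ` {1..k choose 2}
     \<union> P1 ` Ed \<union> Q1 ` Ed \<union> R1 ` Ed \<union> P2 ` Ed \<union> Q2 ` Ed \<union> R2 ` Ed \<union> Z ` V"

definition G'_edges :: "'v set \<Rightarrow> 'v set set \<Rightarrow> ('v \<Rightarrow> nat) \<Rightarrow> (nat set \<Rightarrow> nat)
     \<Rightarrow> 'v gvert set set" where
  "G'_edges V Ed part lab =
      {{Vx u, Ex e} | u e. e \<in> Ed \<and> u \<in> e}
    \<union> {{A (lab (part ` e)), P1 e} | e. e \<in> Ed}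
    \<union> {{P1 e, Q1 e} | e. e \<in> Ed}
    \<union> {{Q1 e, R1 e} | e. e \<in> Ed}
    \<union> {{R1 e, Ex e} | e. e \<in> Ed}
    \<union> {{B (lab (part ` e)), P2 e} | e. e \<in> Ed}
    \<union> {{P2 e, Q2 e} | e. e \<in> Ed}
    \<union> {{Q2 e, R2 e} | e. e \<in> Ed}
    \<union> {{R2 e, Ex e} | e. e \<in> Ed}
    \<union> {{Vx v, Z v} | v. v \<in> V}"

definition independent_in :: "'a set \<Rightarrow> 'a set set \<Rightarrow> 'a set \<Rightarrow> bool" where
  "independent_in VV EE I \<longleftrightarrow> I \<subseteq> VV \<and> (\<forall>u\<in>I. \<forall>w\<in>I. {u, w} \<notin> EE)"

definition ts_sequence :: "'a set \<Rightarrow> 'a set set \<Rightarrow> 'a set \<Rightarrow> 'a set \<Rightarrow> nat \<Rightarrow> bool" where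
  "ts_sequence VV EE S T m \<longleftrightarrow>
     (\<exists>I :: nat \<Rightarrow> 'a set. I 0 = S \<and> I m = T \<and>
        (\<forall>j\<le>m. independent_in VV EE (I j) \<and> card (I j) = card S) \<and>
        (\<forall>j<m. \<exists>u w. u \<in> I j \<and> w \<notin> I j \<and> {u, w} \<in> EE \<and>
                      I (Suc j) = (I j - {u}) \<union> {w}))"

end

theory Submission
  imports Defs
begin


lemma ts_trans:
  assumes "ts_sequence VV EE S T m" "ts_sequence VV EE T R n"
  shows "ts_sequence VV EE S R (m+n)"
proof -
  obtain I1 where I1: "I1 0 = S" "I1 m = T"
    "\<forall>j\<le>m. independent_in VV EE (I1 j) \<and> card (I1 j) = card S"
    "\<forall>j<m. \<exists>u w. u \<in> I1 j \<and> w \<notin> I1 j \<and> {u, w} \<in> EE \<and> I1 (Suc j) = (I1 j - {u}) \<union> {w}"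
    using assms(1) unfolding ts_sequence_def by blast
  obtain I2 where I2: "I2 0 = T" "I2 n = R"
    "\<forall>j\<le>n. independent_in VV EE (I2 j) \<and> card (I2 j) = card T"
    "\<forall>j<n. \<exists>u w. u \<in> I2 j \<and> w \<notin> I2 j \<and> {u, w} \<in> EE \<and> I2 (Suc j) = (I2 j - {u}) \<union> {w}"
    using assms(2) unfolding ts_sequence_def by blast
  have cT: "card T = card S" using I1 by auto
  define I where "I j = (if j \<le> m then I1 j else I2 (j - m))" for j
  have Ij: "j \<ge> m \<Longrightarrow> I j = I2 (j - m)" for j
    using I1(2) I2(1) by (auto simp: I_def)
  have a: "I 0 = S" using I1 by (simp add: I_def)
  have b: "I (m+n) = R" using Ij[of "m+n"] I2 by simp
  have c: "independent_in VV EE (I j) \<and> card (I j) = card S" if j: "j \<le> m + n" for j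
  proof (cases "j \<le> m")
    case True then show ?thesis using I1 by (simp add: I_def)
  next
    case False then show ?thesis using I2(3) Ij[of j] cT j by auto
  qed
  have d: "\<exists>u w. u \<in> I j \<and> w \<notin> I j \<and> {u, w} \<in> EE \<and> I (Suc j) = I j - {u} \<union> {w}"
    if j: "j < m + n" for j
  proof (cases "j < m")
    case True then show ?thesis using I1(4) by (simp add: I_def)
  next
    case False
    then have "I j = I2 (j - m)" "I (Suc j) = I2 (Suc (j - m))" using Ij[of j] Ij[of "Suc j"]
      by (auto simp: Suc_diff_le)
    then show ?thesis using I2(4) j False by auto
  qed
  show ?thesis unfolding ts_sequence_def
    using a b c d by blast
qed

lemma ts1:
  assumes "independent_in VV EE S" "independent_in VV EE T" "finite S"
    "u \<in> S" "w \<notin> S" "{u, w} \<in> EE" "T = S - {u} \<union> {w}"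
  shows "ts_sequence VV EE S T 1"
proof -
  have "card T = card S" using assms(3-5,7)
    by (simp add: card_insert_if) (metis Suc_pred card_Diff_singleton card_gt_0_iff emptyE finite_Diff)
  show ?thesis unfolding ts_sequence_def
    apply (rule exI[of _ "\<lambda>j. if j = 0 then S else T"])
    using assms \<open>card T = card S\<close> by (auto simp: le_Suc_eq)
qed

lemma ts0: "independent_in VV EE S \<Longrightarrow> ts_sequence VV EE S S 0"
  unfolding ts_sequence_def by (rule exI[of _ "\<lambda>j. S"]) auto



locale LL =
  fixes V :: "'v set" and Ed :: "'v set set" and part :: "'v \<Rightarrow> nat"
    and k :: nat and lab :: "nat set \<Rightarrow> nat" and c :: "nat \<Rightarrow> 'v"
  assumes finV: "finite V"
    and edges: "\<forall>e\<in>Ed. \<exists>u v. u \<in> V \<and> v \<in> V \<and> u \<noteq> v \<and> e = {u, v}"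
    and part_range: "\<forall>v\<in>V. part v \<in> {1..k}"
    and no_inner: "\<forall>u v. {u, v} \<in> Ed \<longrightarrow> part u \<noteq> part v"
    and lab_bij: "bij_betw lab (part_pairs k) {1..k choose 2}"
    and cV: "\<forall>i\<in>{1..k}. c i \<in> V \<and> part (c i) = i"
    and cE: "\<forall>i\<in>{1..k}. \<forall>j\<in>{1..k}. i \<noteq> j \<longrightarrow> {c i, c j} \<in> Ed"
begin

abbreviation "KK \<equiv> k choose 2"
abbreviation "VV \<equiv> G'_verts V Ed k"
abbreviation "EE \<equiv> G'_edges V Ed part lab"

lemma EdV: "Ed \<subseteq> Pow V" using edges by auto
lemma finEd: "finite Ed" using EdV finV by (meson finite_Pow_iff finite_subset)
lemma finVV: "finite VV" unfolding G'_verts_def using finEd finV by simp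

lemma EE_dbl: "p \<in> EE \<Longrightarrow> \<exists>a b. p = {a, b}"
  unfolding G'_edges_def by (elim UnE CollectE exE conjE; blast)

lemma indep_alt: "independent_in VV EE I \<longleftrightarrow> I \<subseteq> VV \<and> (\<forall>p\<in>EE. \<not> p \<subseteq> I)"
  unfolding independent_in_def
proof (intro iffI conjI; (elim conjE)?)
  assume h: "\<forall>u\<in>I. \<forall>w\<in>I. {u, w} \<notin> EE"
  show "\<forall>p\<in>EE. \<not> p \<subseteq> I"
  proof (intro ballI notI)
    fix p assume p: "p \<in> EE" "p \<subseteq> I"
    then obtain a b where "p = {a, b}" using EE_dbl by blast
    with p h show False by simp
  qed
next
  assume h: "\<forall>p\<in>EE. \<not> p \<subseteq> I"
  show "\<forall>u\<in>I. \<forall>w\<in>I. {u, w} \<notin> EE"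
  proof (intro ballI notI)
    fix u w assume "u \<in> I" "w \<in> I" "{u, w} \<in> EE"
    with h show False by (metis empty_subsetI insert_subset)
  qed
qed

lemma indep_char: "independent_in VV EE I \<longleftrightarrow> I \<subseteq> VV \<and>
  (\<forall>e\<in>Ed. \<forall>u\<in>e. \<not> (Vx u \<in> I \<and> Ex e \<in> I)) \<and>
  (\<forall>e\<in>Ed. \<not> (A (lab (part ` e)) \<in> I \<and> P1 e \<in> I)) \<and>
  (\<forall>e\<in>Ed. \<not> (P1 e \<in> I \<and> Q1 e \<in> I)) \<and>
  (\<forall>e\<in>Ed. \<not> (Q1 e \<in> I \<and> R1 e \<in> I)) \<and>
  (\<forall>e\<in>Ed. \<not> (R1 e \<in> I \<and> Ex e \<in> I)) \<and>
  (\<forall>e\<in>Ed. \<not> (B (lab (part ` e)) \<in> I \<and> P2 e \<in> I)) \<and>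
  (\<forall>e\<in>Ed. \<not> (P2 e \<in> I \<and> Q2 e \<in> I)) \<and>
  (\<forall>e\<in>Ed. \<not> (Q2 e \<in> I \<and> R2 e \<in> I)) \<and>
  (\<forall>e\<in>Ed. \<not> (R2 e \<in> I \<and> Ex e \<in> I)) \<and>
  (\<forall>v\<in>V. \<not> (Vx v \<in> I \<and> Z v \<in> I))"
  unfolding indep_alt unfolding G'_edges_def ball_Un
  apply (simp add: Ball_def imp_ex conj_commute)
  apply (rule iffI; (elim conjE; intro conjI); blast)
  done


lemma fin_ind: "independent_in VV EE I \<Longrightarrow> finite I"
  using finVV unfolding independent_in_def by (auto intro: finite_subset)

lemma eVZ: "v \<in> V \<Longrightarrow> {Vx v, Z v} \<in> EE" unfolding G'_edges_def apply (rule UnI2) by auto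
lemma eQ1R1: "e \<in> Ed \<Longrightarrow> {Q1 e, R1 e} \<in> EE" unfolding G'_edges_def apply (rule UnI1) apply (rule UnI1) apply (rule UnI1) apply (rule UnI1) apply (rule UnI1) apply (rule UnI1) apply (rule UnI2) by auto
lemma eR1Ex: "e \<in> Ed \<Longrightarrow> {R1 e, Ex e} \<in> EE" unfolding G'_edges_def apply (rule UnI1) apply (rule UnI1) apply (rule UnI1) apply (rule UnI1) apply (rule UnI1) apply (rule UnI2) by auto
lemma eAP1: "e \<in> Ed \<Longrightarrow> {A (lab (part ` e)), P1 e} \<in> EE" unfolding G'_edges_def apply (rule UnI1) apply (rule UnI1) apply (rule UnI1) apply (rule UnI1) apply (rule UnI1) apply (rule UnI1) apply (rule UnI1) apply (rule UnI1) apply (rule UnI2) by auto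
lemma eP1Q1: "e \<in> Ed \<Longrightarrow> {P1 e, Q1 e} \<in> EE" unfolding G'_edges_def apply (rule UnI1) apply (rule UnI1) apply (rule UnI1) apply (rule UnI1) apply (rule UnI1) apply (rule UnI1) apply (rule UnI1) apply (rule UnI2) by auto
lemma eBP2: "e \<in> Ed \<Longrightarrow> {B (lab (part ` e)), P2 e} \<in> EE" unfolding G'_edges_def apply (rule UnI1) apply (rule UnI1) apply (rule UnI1) apply (rule UnI1) apply (rule UnI2) by auto
lemma eP2Q2: "e \<in> Ed \<Longrightarrow> {P2 e, Q2 e} \<in> EE" unfolding G'_edges_def apply (rule UnI1) apply (rule UnI1) apply (rule UnI1) apply (rule UnI2) by auto
lemma eQ2R2: "e \<in> Ed \<Longrightarrow> {Q2 e, R2 e} \<in> EE" unfolding G'_edges_def apply (rule UnI1) apply (rule UnI1) apply (rule UnI2) by auto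
lemma eR2Ex: "e \<in> Ed \<Longrightarrow> {R2 e, Ex e} \<in> EE" unfolding G'_edges_def apply (rule UnI1) apply (rule UnI2) by auto

definition F :: "'v set \<Rightarrow> 'v gvert set \<Rightarrow> 'v gvert set" where
  "F D X = Vx ` (V - D) \<union> Z ` D \<union> X"

lemma phase_fwd:
  assumes ind: "\<And>D. D \<subseteq> V \<Longrightarrow> independent_in VV EE (F D X)"
    and X: "\<forall>v. Vx v \<notin> X \<and> Z v \<notin> X"
    and "finite D'" "D' \<subseteq> V" "D \<subseteq> V" "D \<inter> D' = {}"
  shows "ts_sequence VV EE (F D X) (F (D \<union> D') X) (card D')"
  using assms(3-6)
proof (induction D' rule: finite_induct)
  case empty then show ?case using ind[of D] by (simp add: ts0)
next
  case (insert x D')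
  have IH: "ts_sequence VV EE (F D X) (F (D \<union> D') X) (card D')" using insert by auto
  have x: "x \<in> V" "x \<notin> D \<union> D'" using insert by auto
  have st: "ts_sequence VV EE (F (D \<union> D') X) (F (D \<union> insert x D') X) 1"
  proof (rule ts1[where u="Vx x" and w="Z x"])
    show "independent_in VV EE (F (D \<union> D') X)" using ind insert by auto
    show "independent_in VV EE (F (D \<union> insert x D') X)" using ind insert by auto
    show "finite (F (D \<union> D') X)" using ind[of "D \<union> D'"] insert fin_ind by auto
    show "Vx x \<in> F (D \<union> D') X" using x unfolding F_def by auto
    show "Z x \<notin> F (D \<union> D') X" using x X unfolding F_def by auto
    show "{Vx x, Z x} \<in> EE" using x eVZ by blast
    show "F (D \<union> insert x D') X = F (D \<union> D') X - {Vx x} \<union> {Z x}" using x X unfolding F_def by auto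
  qed
  have "card (insert x D') = card D' + 1" using insert by simp
  then show ?case using ts_trans[OF IH st] by simp
qed

lemma phase_bwd:
  assumes ind: "\<And>D. D \<subseteq> V \<Longrightarrow> independent_in VV EE (F D X)"
    and X: "\<forall>v. Vx v \<notin> X \<and> Z v \<notin> X"
    and "finite D'" "D' \<subseteq> V" "D \<subseteq> V" "D \<inter> D' = {}"
  shows "ts_sequence VV EE (F (D \<union> D') X) (F D X) (card D')"
  using assms(3-6)
proof (induction D' rule: finite_induct)
  case empty then show ?case using ind[of D] by (simp add: ts0)
next
  case (insert x D')
  have IH: "ts_sequence VV EE (F (D \<union> D') X) (F D X) (card D')" using insert by auto
  have x: "x \<in> V" "x \<notin> D \<union> D'" using insert by auto
  have st: "ts_sequence VV EE (F (D \<union> insert x D') X) (F (D \<union> D') X) 1"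
  proof (rule ts1[where u="Z x" and w="Vx x"])
    show "independent_in VV EE (F (D \<union> D') X)" using ind insert by auto
    show "independent_in VV EE (F (D \<union> insert x D') X)" using ind insert by auto
    show "finite (F (D \<union> insert x D') X)" using ind[of "D \<union> insert x D'"] insert fin_ind by auto
    show "Z x \<in> F (D \<union> insert x D') X" using x unfolding F_def by auto
    show "Vx x \<notin> F (D \<union> insert x D') X" using x X unfolding F_def by auto
    show "{Z x, Vx x} \<in> EE" using x eVZ by (simp add: insert_commute)
    show "F (D \<union> D') X = F (D \<union> insert x D') X - {Z x} \<union> {Vx x}" using x X unfolding F_def by auto
  qed
  have "card (insert x D') = 1 + card D'" using insert by simp
  then show ?case using ts_trans[OF st IH] by simp
qed

definition "C = c ` {1..k}"

lemma C_V: "C \<subseteq> V" using cV unfolding C_def by auto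

lemma card_C: "card C = k"
proof -
  have "inj_on c {1..k}" by (rule inj_onI) (metis cV)
  then show ?thesis unfolding C_def by (simp add: card_image)
qed

definition "pr t = inv_into (part_pairs k) lab t"
definition "ec t = c ` pr t"

lemma ec_props:
  assumes t: "t \<in> {1..KK}"
  shows "ec t \<in> Ed" "ec t \<subseteq> C" "lab (part ` ec t) = t"
proof -
  have im: "lab ` part_pairs k = {1..KK}" using lab_bij bij_betw_imp_surj_on by blast
  have p: "pr t \<in> part_pairs k" unfolding pr_def using t im by (metis inv_into_into)
  have l: "lab (pr t) = t" unfolding pr_def using t im by (metis f_inv_into_f)
  obtain i j where ij: "pr t = {i, j}" "i \<in> {1..k}" "j \<in> {1..k}" "i \<noteq> j"
    using p unfolding part_pairs_def by blast
  have ecij: "ec t = {c i, c j}" unfolding ec_def ij by simp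
  show "ec t \<in> Ed" using ecij cE ij by auto
  show "ec t \<subseteq> C" using ecij ij unfolding C_def by auto
  have "part ` ec t = {i, j}" using ecij cV ij by auto
  then show "lab (part ` ec t) = t" using l ij by simp
qed

definition "XM t = A ` {t..KK} \<union> B ` {1..<t} \<union> Q1 ` Ed \<union> Q2 ` Ed"

lemma XM_ok: "\<forall>v. Vx v \<notin> XM t \<and> Z v \<notin> XM t" unfolding XM_def by auto

lemma ind_XM:
  assumes "D \<subseteq> V" "1 \<le> t" "t \<le> KK + 1"
  shows "independent_in VV EE (F D (XM t))"
  unfolding indep_char
proof (intro conjI)
  show "F D (XM t) \<subseteq> VV" using assms unfolding F_def XM_def G'_verts_def by auto
qed (auto simp: F_def XM_def)


lemma step8:
  assumes t: "t \<in> {1..KK}"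
  shows "ts_sequence VV EE (F C (XM t)) (F C (XM (Suc t))) 8"
proof -
  define e where "e = ec t"
  have eE: "e \<in> Ed" and eC: "e \<subseteq> C" and le: "lab (part ` e) = t"
    using ec_props[OF t] unfolding e_def by auto
  have CV: "C \<subseteq> V" by (rule C_V)
  define base where "base = Vx ` (V - C) \<union> Z ` C \<union> A ` {t<..KK} \<union> B ` {1..<t}
      \<union> Q1 ` (Ed - {e}) \<union> Q2 ` (Ed - {e})"
  define s0 where "s0 = base \<union> {A t, Q1 e, Q2 e}"
  define s1 where "s1 = base \<union> {A t, R1 e, Q2 e}"
  define s2 where "s2 = base \<union> {A t, Ex e, Q2 e}"
  define s3 where "s3 = base \<union> {P1 e, Ex e, Q2 e}"
  define s4 where "s4 = base \<union> {Q1 e, Ex e, Q2 e}"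
  define s5 where "s5 = base \<union> {Q1 e, Ex e, P2 e}"
  define s6 where "s6 = base \<union> {Q1 e, Ex e, B t}"
  define s7 where "s7 = base \<union> {Q1 e, R2 e, B t}"
  define s8 where "s8 = base \<union> {Q1 e, Q2 e, B t}"
  have subb: "base \<subseteq> VV" unfolding base_def G'_verts_def using CV t by auto
  have vv: "A t \<in> VV" "B t \<in> VV" "Q1 e \<in> VV" "Q2 e \<in> VV" "R1 e \<in> VV" "R2 e \<in> VV"
     "P1 e \<in> VV" "P2 e \<in> VV" "Ex e \<in> VV"
    using t eE unfolding G'_verts_def by auto
  have nb: "A t \<notin> base" "B t \<notin> base" "Q1 e \<notin> base" "Q2 e \<notin> base" "R1 e \<notin> base" "R2 e \<notin> base"
     "P1 e \<notin> base" "P2 e \<notin> base" "Ex e \<notin> base"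
    unfolding base_def by auto
  have m0: "F C (XM t) = s0" using t eE unfolding F_def XM_def s0_def base_def by auto
  have m8: "F C (XM (Suc t)) = s8" using t eE unfolding F_def XM_def s8_def base_def by auto
  have finb: "finite base" using subb finVV by (rule finite_subset)
  have nVx: "Vx u \<notin> base" if "u \<in> e" for u using that eC unfolding base_def by auto
  have bP1: "P1 x \<notin> base" "R1 x \<notin> base" "P2 x \<notin> base" "R2 x \<notin> base" "Ex x \<notin> base" for x
    unfolding base_def by auto
  have bQ: "Q1 x \<in> base \<Longrightarrow> x \<noteq> e" "Q2 x \<in> base \<Longrightarrow> x \<noteq> e" for x
    unfolding base_def by auto
  have bVZ: "\<not> (Vx v \<in> base \<and> Z v \<in> base)" for v unfolding base_def by auto
  have bAB: "A t' \<in> base \<Longrightarrow> t' > t" "B t' \<in> base \<Longrightarrow> t' < t" for t'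
    unfolding base_def by auto
  note facts = nb nVx bP1 bQ bVZ bAB le
  have i0: "independent_in VV EE s0" unfolding indep_char s0_def using subb vv facts
    by (intro conjI; auto)
  have i1: "independent_in VV EE s1" unfolding indep_char s1_def using subb vv facts
    by (intro conjI; auto)
  have i2: "independent_in VV EE s2" unfolding indep_char s2_def using subb vv facts
    by (intro conjI; auto)
  have i3: "independent_in VV EE s3" unfolding indep_char s3_def using subb vv facts
    by (intro conjI; auto)
  have i4: "independent_in VV EE s4" unfolding indep_char s4_def using subb vv facts
    by (intro conjI; auto)
  have i5: "independent_in VV EE s5" unfolding indep_char s5_def using subb vv facts
    by (intro conjI; auto)
  have i6: "independent_in VV EE s6" unfolding indep_char s6_def using subb vv facts
    by (intro conjI; auto)
  have i7: "independent_in VV EE s7" unfolding indep_char s7_def using subb vv facts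
    by (intro conjI; auto)
  have i8: "independent_in VV EE s8" unfolding indep_char s8_def using subb vv facts
    by (intro conjI; auto)
  have t1: "ts_sequence VV EE s0 s1 1"
    by (rule ts1[OF i0 i1, where u="Q1 e" and w="R1 e"])
       (use finb nb eQ1R1[OF eE] in \<open>auto simp: s0_def s1_def\<close>)
  have t2: "ts_sequence VV EE s1 s2 1"
    by (rule ts1[OF i1 i2, where u="R1 e" and w="Ex e"])
       (use finb nb eR1Ex[OF eE] in \<open>auto simp: s1_def s2_def\<close>)
  have t3: "ts_sequence VV EE s2 s3 1"
    by (rule ts1[OF i2 i3, where u="A t" and w="P1 e"])
       (use finb nb eAP1[OF eE] le in \<open>auto simp: s2_def s3_def\<close>)
  have t4: "ts_sequence VV EE s3 s4 1"
    by (rule ts1[OF i3 i4, where u="P1 e" and w="Q1 e"])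
       (use finb nb eP1Q1[OF eE] in \<open>auto simp: s3_def s4_def\<close>)
  have t5: "ts_sequence VV EE s4 s5 1"
    by (rule ts1[OF i4 i5, where u="Q2 e" and w="P2 e"])
       (use finb nb eP2Q2[OF eE] in \<open>auto simp: s4_def s5_def insert_commute\<close>)
  have t6: "ts_sequence VV EE s5 s6 1"
    by (rule ts1[OF i5 i6, where u="P2 e" and w="B t"])
       (use finb nb eBP2[OF eE] le in \<open>auto simp: s5_def s6_def insert_commute\<close>)
  have t7: "ts_sequence VV EE s6 s7 1"
    by (rule ts1[OF i6 i7, where u="Ex e" and w="R2 e"])
       (use finb nb eR2Ex[OF eE] in \<open>auto simp: s6_def s7_def insert_commute\<close>)
  have t8: "ts_sequence VV EE s7 s8 1"
    by (rule ts1[OF i7 i8, where u="R2 e" and w="Q2 e"])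
       (use finb nb eQ2R2[OF eE] in \<open>auto simp: s7_def s8_def insert_commute\<close>)
  have "ts_sequence VV EE s0 s8 (1+1+1+1+1+1+1+1)"
    by (rule ts_trans[OF ts_trans[OF ts_trans[OF ts_trans[OF ts_trans[OF ts_trans[OF ts_trans[OF t1 t2] t3] t4] t5] t6] t7] t8])
  then show ?thesis using m0 m8 by (simp add: eval_nat_numeral)
qed


lemma phase2: "t \<le> KK \<Longrightarrow> ts_sequence VV EE (F C (XM 1)) (F C (XM (Suc t))) (8*t)"
proof (induction t)
  case 0 then show ?case using ind_XM[OF C_V, of 1] by (simp add: ts0)
next
  case (Suc t)
  have "ts_sequence VV EE (F C (XM 1)) (F C (XM (Suc (Suc t)))) (8*t + 8)"
    by (rule ts_trans[OF Suc.IH step8]) (use Suc.prems in auto)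
  then show ?case by (simp add: add.commute)
qed

lemma full: "ts_sequence VV EE (Vx ` V \<union> A ` {1..KK} \<union> (Q1 ` Ed \<union> Q2 ` Ed))
    (Vx ` V \<union> B ` {1..KK} \<union> (Q1 ` Ed \<union> Q2 ` Ed)) (8 * KK + 2 * k)"
proof -
  have finC: "finite C" unfolding C_def by simp
  have p1: "ts_sequence VV EE (F {} (XM 1)) (F C (XM 1)) (card C)"
    using phase_fwd[where X="XM 1" and D="{}" and D'=C] ind_XM XM_ok finC C_V by auto
  have p3: "ts_sequence VV EE (F C (XM (Suc KK))) (F {} (XM (Suc KK))) (card C)"
    using phase_bwd[where X="XM (Suc KK)" and D="{}" and D'=C] ind_XM XM_ok finC C_V by auto
  have p2: "ts_sequence VV EE (F C (XM 1)) (F C (XM (Suc KK))) (8*KK)"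
    by (rule phase2) simp
  have "ts_sequence VV EE (F {} (XM 1)) (F {} (XM (Suc KK))) (card C + 8*KK + card C)"
    using ts_trans[OF ts_trans[OF p1 p2] p3] by simp
  moreover have "F {} (XM 1) = Vx ` V \<union> A ` {1..KK} \<union> (Q1 ` Ed \<union> Q2 ` Ed)"
    unfolding F_def XM_def by auto
  moreover have "F {} (XM (Suc KK)) = Vx ` V \<union> B ` {1..KK} \<union> (Q1 ` Ed \<union> Q2 ` Ed)"
    unfolding F_def XM_def by auto
  ultimately show ?thesis using card_C by (simp add: algebra_simps)
qed

end

theorem lemma5p2:
  fixes V :: "'v set" and Ed :: "'v set set" and part :: "'v \<Rightarrow> nat"
    and k :: nat and lab :: "nat set \<Rightarrow> nat"
  assumes finV: "finite V"
    and edges: "\<forall>e\<in>Ed. \<exists>u v. u \<in> V \<and> v \<in> V \<and> u \<noteq> v \<and> e = {u, v}"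
    and part_range: "\<forall>v\<in>V. part v \<in> {1..k}"
    and no_inner: "\<forall>u v. {u, v} \<in> Ed \<longrightarrow> part u \<noteq> part v"
    and lab_bij: "bij_betw lab (part_pairs k) {1..k choose 2}"
    and clique: "\<exists>c :: nat \<Rightarrow> 'v. (\<forall>i\<in>{1..k}. c i \<in> V \<and> part (c i) = i) \<and>
                   (\<forall>i\<in>{1..k}. \<forall>j\<in>{1..k}. i \<noteq> j \<longrightarrow> {c i, c j} \<in> Ed)"
  shows "\<exists>m \<le> 8 * (k choose 2) + 2 * k.
           ts_sequence (G'_verts V Ed k) (G'_edges V Ed part lab)
             (Vx ` V \<union> A ` {1..k choose 2} \<union> (Q1 ` Ed \<union> Q2 ` Ed))
             (Vx ` V \<union> B ` {1..k choose 2} \<union> (Q1 ` Ed \<union> Q2 ` Ed)) m"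
proof -
  obtain c :: "nat \<Rightarrow> 'v" where c: "\<forall>i\<in>{1..k}. c i \<in> V \<and> part (c i) = i"
    "\<forall>i\<in>{1..k}. \<forall>j\<in>{1..k}. i \<noteq> j \<longrightarrow> {c i, c j} \<in> Ed"
    using clique by blast
  interpret LL V Ed part k lab c
    using assms c by unfold_locales auto
  show ?thesis using full by blast
qed

end
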